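(* Suppose $\tau_L>\delta_L+1$ and $\delta_L>0$. Let $K=\left[-\frac{1}{\lambda_L^u},\hat m_{\rm max}\right]$ for some $\hat m_{\rm max}\in[0,1]$. The cone $\hat\Psi_K$ is invariant and expanding for $A_L^{-1}$ with expansion factor $\hat c_L=\min\left\{\frac{1}{\lambda_L^s},\frac{1+\lambda_L^s}{\sqrt2\,\lambda_L^s}\right\}$.
   Context: Let $A_L=\begin{bmatrix}\tau_L&1\\-\delta_L&0\end{bmatrix}$; under the hypotheses its eigenvalues are real with $0<\lambda_L^s<1<\lambda_L^u$. For an interval $K\subset\mathbb{R}$, $\hat\Psi_K=\left\{t\begin{bmatrix}\hat m\\1\end{bmatrix}: \hat m\in K,\ t\in\mathbb{R}\right\}$. For a real $2\times2$ matrix $A$, the cone $\hat\Psi_K$ is invariant for $A$ if $Av\in\hat\Psi_K$ for all $v\in\hat\Psi_K$, and expanding with expansion factor $c>1$ if $\|Av\|\ge c\|v\|$ for all $v\in\hat\Psi_K$ (Euclidean norm). *)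

theory Defs
  imports "HOL-Analysis.Analysis"
begin

definition A_L :: "real \<Rightarrow> real \<Rightarrow> real^2^2" where
  "A_L tau delta = vector [vector [tau, 1], vector [- delta, 0]]"

definition is_eigenvalue :: "real^2^2 \<Rightarrow> real \<Rightarrow> bool" where
  "is_eigenvalue A l \<longleftrightarrow> (\<exists>v. v \<noteq> 0 \<and> A *v v = l *\<^sub>R v)"

definition cone_hat :: "real set \<Rightarrow> (real^2) set" where
  "cone_hat K = {t *\<^sub>R vector [m, 1] | m t. m \<in> K}"

definition cone_invariant :: "real^2^2 \<Rightarrow> (real^2) set \<Rightarrow> bool" where
  "cone_invariant A C \<longleftrightarrow> (\<forall>v\<in>C. A *v v \<in> C)"

definition cone_expanding :: "real^2^2 \<Rightarrow> (real^2) set \<Rightarrow> real \<Rightarrow> bool" where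
  "cone_expanding A C c \<longleftrightarrow> c > 1 \<and> (\<forall>v\<in>C. norm (A *v v) \<ge> c * norm v)"

end

theory Submission
  imports Defs
begin
lemma inv_AL:
  assumes "delta \<noteq> 0"
  shows "matrix_inv (A_L tau delta) = vector [vector [0, -1/delta], vector [1, tau/delta]]"
proof -
  define B :: "real^2^2" where "B = vector [vector [0, -1/delta], vector [1, tau/delta]]"
  have AB: "A_L tau delta ** B = mat 1" and BA: "B ** A_L tau delta = mat 1"
    using assms by (auto simp: A_L_def B_def matrix_matrix_mult_def vec_eq_iff forall_2 sum_2 mat_def field_simps)
  let ?C = "matrix_inv (A_L tau delta)"
  have C: "A_L tau delta ** ?C = mat 1 \<and> ?C ** A_L tau delta = mat 1"
    unfolding matrix_inv_def by (rule someI[of _ B]) (use AB BA in auto)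
  have "?C = ?C ** (A_L tau delta ** B)" by (simp add: AB)
  also have "\<dots> = (?C ** A_L tau delta) ** B" by (simp add: matrix_mul_assoc)
  also have "\<dots> = B" using C by simp
  finally show ?thesis by (simp add: B_def)
qed

lemma eig:
  assumes "is_eigenvalue (A_L tau delta) l"
  shows "l^2 - tau*l + delta = 0"
proof -
  obtain v where v: "v \<noteq> 0" "A_L tau delta *v v = l *\<^sub>R v" using assms is_eigenvalue_def by auto
  have e1: "tau * v$1 + v$2 = l * v$1" and e2: "- delta * v$1 = l * v$2"
    using v(2) by (auto simp: A_L_def matrix_vector_mult_def vec_eq_iff forall_2 sum_2)
  have "v$1 \<noteq> 0"
  proof
    assume "v$1 = 0" then have "v$2 = 0" using e1 by simp
    with \<open>v$1 = 0\<close> have "v = 0" by (simp add: vec_eq_iff forall_2)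
    with v show False by simp
  qed
  have "v$2 = (l - tau) * v$1" using e1 by (simp add: algebra_simps)
  with e2 have "(l^2 - tau*l + delta) * v$1 = 0" by (simp add: algebra_simps power2_eq_square)
  with \<open>v$1 \<noteq> 0\<close> show ?thesis by simp
qed

lemma norm2: "norm (x::real^2) = sqrt ((x$1)^2 + (x$2)^2)"
  by (simp add: norm_vec_def L2_set_def sum_2)

lemma core:
  fixes ls lu m K :: real
  assumes "0 < ls" "ls < 1" "1 < lu" "-1/lu \<le> m" "m \<le> 1"
    and "K \<le> lu^2" "K \<le> (lu + ls*lu)^2/2"
  shows "K * (m^2+1) \<le> 1 + (ls*lu*m + ls + lu)^2"
proof (cases "m \<le> 0")
  case True
  have "-1 \<le> lu*m" using assms(4) assms(3) by (simp add: field_simps)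
  hence "(lu*m)^2 \<le> 1" using True assms(3)
    by (smt (verit) mult_nonneg_nonpos power2_eq_square mult_le_cancel_left1 mult_minus_left mult_minus_right)
  have "lu \<le> ls*lu*m + ls + lu"
  proof -
    have "ls * (lu*m) \<ge> ls * (-1)" using \<open>-1 \<le> lu*m\<close> assms(1) by (intro mult_left_mono) auto
    thus ?thesis by (simp add: algebra_simps)
  qed
  hence "lu^2 \<le> (ls*lu*m + ls + lu)^2" using assms(3) by (intro power_mono) auto
  have "K*(m^2+1) \<le> lu^2*(m^2+1)" using assms(6) by (intro mult_right_mono) auto
  also have "\<dots> = (lu*m)^2 + lu^2" by (simp add: algebra_simps power2_eq_square)
  finally show ?thesis using \<open>(lu*m)^2 \<le> 1\<close> \<open>lu^2 \<le> _\<close> by linarith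
next
  case False
  define d where "d = ls*lu"
  define tt where "tt = ls + lu"
  define g where "g = (\<lambda>x::real. 1 + (d*x+tt)^2 - K*(x^2+1))"
  have g0: "g 0 \<ge> 0"
  proof -
    have "lu^2 \<le> tt^2" unfolding tt_def using assms by (intro power_mono) auto
    thus ?thesis unfolding g_def using assms(6) by simp
  qed
  have g1: "g 1 \<ge> 0"
  proof -
    have "(lu + ls*lu)^2 \<le> (d + tt)^2" unfolding tt_def d_def using assms by (intro power_mono) auto
    thus ?thesis unfolding g_def using assms(7) by simp
  qed
  have eq: "g m = (1-m)*g 0 + m*g 1 + (d^2-K)*(m*(m-1))"
    unfolding g_def by (simp add: algebra_simps power2_eq_square)
  have mpos: "0 < m" using False by simp
  show ?thesis
  proof (cases "d^2 \<ge> K")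
    case True
    have "g m = g 0 + m*(2*d*tt + m*(d^2-K))" unfolding g_def by (simp add: algebra_simps power2_eq_square)
    moreover have "0 \<le> m*(2*d*tt + m*(d^2-K))" using mpos True assms unfolding d_def tt_def
      by (intro mult_nonneg_nonneg add_nonneg_nonneg) auto
    ultimately have "g m \<ge> 0" using g0 by linarith
    thus ?thesis unfolding g_def d_def tt_def by (simp add: algebra_simps)
  next
    case False
    have "0 \<le> (d^2-K)*(m*(m-1))" using False mpos assms(5)
      by (intro mult_nonpos_nonpos) (auto intro: mult_nonneg_nonpos)
    moreover have "0 \<le> (1-m)*g 0" "0 \<le> m*g 1" using g0 g1 mpos assms(5) by auto
    ultimately have "g m \<ge> 0" using eq by linarith
    thus ?thesis unfolding g_def d_def tt_def by (simp add: algebra_simps)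
  qed
qed

lemma norm_sc: "norm (t *\<^sub>R vector [a, b] :: real^2) = \<bar>t\<bar> * sqrt (a^2 + b^2)"
proof -
  have "(t*a)^2 + (t*b)^2 = t^2 * (a^2+b^2)" by (simp add: algebra_simps power2_eq_square)
  thus ?thesis by (simp add: norm2 real_sqrt_mult)
qed

theorem lemma6p1:
  fixes tau delta ls lu mmax :: real
  assumes "tau > delta + 1" and "delta > 0"
    and "is_eigenvalue (A_L tau delta) ls" and "is_eigenvalue (A_L tau delta) lu"
    and "0 < ls" and "ls < 1" and "1 < lu"
    and "mmax \<in> {0..1}"
  shows "cone_invariant (matrix_inv (A_L tau delta)) (cone_hat {-1/lu..mmax})
       \<and> cone_expanding (matrix_inv (A_L tau delta)) (cone_hat {-1/lu..mmax})
           (min (1/ls) ((1 + ls) / (sqrt 2 * ls)))"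
proof -
  have es: "ls^2 - tau*ls + delta = 0" using eig[OF assms(3)] .
  have eu: "lu^2 - tau*lu + delta = 0" using eig[OF assms(4)] .
  have "(ls - lu) * (ls + lu - tau) = 0" using es eu by (simp add: algebra_simps power2_eq_square)
  hence tau: "tau = ls + lu" using assms(6,7) by simp
  have delta: "delta = ls * lu" using es tau by (simp add: algebra_simps power2_eq_square)
  define c where "c = min (1/ls) ((1 + ls) / (sqrt 2 * ls))"
  have s2: "sqrt 2 < 2"
    by (rule real_less_lsqrt) auto
  have s2p: "sqrt 2 > 0" by simp
  have c1: "c > 1"
  proof -
    have "1/ls > 1" using assms(5,6) by simp
    moreover have "(1 + ls) / (sqrt 2 * ls) > 1"
    proof -
      have "sqrt 2 * ls < 2 * ls" using s2 assms(5) by (intro mult_strict_right_mono) auto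
      hence "sqrt 2 * ls < 1 + ls" using assms(6) by linarith
      thus ?thesis using assms(5) s2p by simp
    qed
    ultimately show ?thesis unfolding c_def by simp
  qed
  have K1: "(c*delta)^2 \<le> lu^2"
  proof -
    have "c*delta \<le> (1/ls)*delta" unfolding c_def using assms(2) by (intro mult_right_mono) auto
    also have "\<dots> = lu" using delta assms(5) by simp
    finally show ?thesis using c1 assms(2) by (intro power_mono) auto
  qed
  have K2: "(c*delta)^2 \<le> (lu + ls*lu)^2/2"
  proof -
    have "c*delta \<le> ((1 + ls) / (sqrt 2 * ls))*delta" unfolding c_def using assms(2) by (intro mult_right_mono) auto
    also have "\<dots> = (lu + ls*lu) / sqrt 2" using delta assms(5) by (simp add: field_simps)
    finally have "(c*delta)^2 \<le> ((lu + ls*lu) / sqrt 2)^2" using c1 assms(2) by (intro power_mono) auto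
    also have "\<dots> = (lu + ls*lu)^2/2" by (simp add: power_divide)
    finally show ?thesis .
  qed
  have inv: "matrix_inv (A_L tau delta) = vector [vector [0, -1/delta], vector [1, tau/delta]]"
    using inv_AL assms(2) by simp
  have app: "matrix_inv (A_L tau delta) *v (t *\<^sub>R vector [m, 1]) = t *\<^sub>R vector [-1/delta, m + tau/delta]" for t m
    unfolding inv by (auto simp: matrix_vector_mult_def vec_eq_iff forall_2 sum_2 algebra_simps)
  have lupos: "lu > 0" using assms(7) by simp
  have pos: "delta*m + tau \<ge> lu" if "m \<ge> -1/lu" for m
  proof -
    have "-1 \<le> lu*m" using that lupos by (simp add: field_simps)
    hence "ls * (lu*m) \<ge> ls * (-1)" using assms(5) by (intro mult_left_mono) auto
    thus ?thesis using delta tau by (simp add: algebra_simps)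
  qed
  have I: "cone_invariant (matrix_inv (A_L tau delta)) (cone_hat {-1/lu..mmax})"
    unfolding cone_invariant_def cone_hat_def
  proof (safe)
    fix m t :: real assume m: "m \<in> {-1/lu..mmax}"
    have p: "delta*m + tau \<ge> lu" using pos m by auto
    define m' where "m' = -1/(delta*m+tau)"
    define s where "s = t*(m + tau/delta)"
    have "m' \<ge> -1/lu" unfolding m'_def using p lupos by (simp add: field_simps)
    moreover have "m' \<le> mmax"
    proof -
      have "0 \<le> 1/(delta*m+tau)" using p lupos by simp
      thus ?thesis unfolding m'_def using assms(8) by (simp only: atLeastAtMost_iff) linarith
    qed
    moreover have "(t *\<^sub>R vector [-1/delta, m + tau/delta] :: real^2) = s *\<^sub>R vector [m', 1]"
    proof -
      have nz: "delta*m+tau \<noteq> 0" using p lupos by simp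
      have "(t *\<^sub>R vector [-1/delta, m + tau/delta] :: real^2) $ i = (s *\<^sub>R vector [m', 1] :: real^2) $ i" for i
      proof -
        have q: "m + tau/delta = (delta*m+tau)/delta" using assms(2) by (simp add: field_simps)
        have "s * m' = -t/delta" unfolding s_def m'_def q using nz by simp
        hence c1': "t * (-1/delta) = s * m'" by simp
        show ?thesis
        proof (cases "i = 1")
          case True thus ?thesis using c1' by simp
        next
          case False hence "i = 2" using exhaust_2[of i] by auto
          thus ?thesis unfolding s_def by simp
        qed
      qed
      thus ?thesis by (simp add: vec_eq_iff)
    qed
    ultimately show "\<exists>m'' s'. matrix_inv (A_L tau delta) *v (t *\<^sub>R vector [m, 1]) = s' *\<^sub>R vector [m'', 1] \<and> m'' \<in> {-1/lu..mmax}"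
      unfolding app by auto
  qed
  have E: "\<forall>v\<in>cone_hat {-1/lu..mmax}. norm (matrix_inv (A_L tau delta) *v v) \<ge> c * norm v"
    unfolding cone_hat_def
  proof (safe)
    fix m t :: real assume m: "m \<in> {-1/lu..mmax}"
    have core': "(c*delta)^2 * (m^2+1) \<le> 1 + (ls*lu*m + ls + lu)^2"
      using core[of ls lu m "(c*delta)^2"] assms(5,6,7,8) m K1 K2 by simp
    have n1: "norm (t *\<^sub>R vector [m, 1] :: real^2) = \<bar>t\<bar> * sqrt (m^2+1)"
      using norm_sc[of t m 1] by simp
    have n2: "norm (t *\<^sub>R vector [-1/delta, m + tau/delta] :: real^2) = \<bar>t\<bar> * (sqrt (1 + (delta*m+tau)^2) / delta)"
    proof -
      have "(-1/delta)^2 + (m + tau/delta)^2 = (1 + (delta*m+tau)^2) / delta^2"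
        using assms(2) by (simp add: field_simps power2_eq_square)
      hence "sqrt ((-1/delta)^2 + (m + tau/delta)^2) = sqrt (1 + (delta*m+tau)^2) / delta"
        using assms(2) by (simp add: real_sqrt_divide)
      thus ?thesis using norm_sc[of t "-1/delta" "m + tau/delta"] by simp
    qed
    have "c * sqrt (m^2+1) * delta = sqrt ((c*delta)^2 * (m^2+1))"
      using c1 assms(2) by (simp add: real_sqrt_mult)
    also have "\<dots> \<le> sqrt (1 + (delta*m+tau)^2)"
      using core' delta tau by (simp add: algebra_simps)
    finally have "c * sqrt (m^2+1) \<le> sqrt (1 + (delta*m+tau)^2) / delta"
      using assms(2) by (simp add: field_simps)
    hence "\<bar>t\<bar> * (c * sqrt (m^2+1)) \<le> \<bar>t\<bar> * (sqrt (1 + (delta*m+tau)^2) / delta)"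
      by (intro mult_left_mono) auto
    thus "c * norm (t *\<^sub>R vector [m, 1] :: real^2) \<le> norm (matrix_inv (A_L tau delta) *v (t *\<^sub>R vector [m, 1]))"
      unfolding app n1 n2 by (simp add: algebra_simps)
  qed
  show ?thesis using I E c1 unfolding cone_expanding_def c_def by auto
qed

end
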